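(* Let $n\ge 2$ be even and $k\ge 3$. Let $Q(n,k)$ be the configuration with exactly $2k-1$ levels in which: level $2k-1$ (top) consists of $\frac n2$ blocks in consecutive slots; level $2k-2$ is full ($n$ blocks); and each level $i$ with $1\le i\le 2k-3$ consists of $\frac n2$ blocks in pairwise non-adjacent slots. Then the genus of (the boundary surface of) $Q(n,k)$ is $$ g(n,k)=\frac{n(n-2)(k-2)}{2}. $$
   Context: Blocks are boxes of length $n$, width $1$, height $1$. Level $i$ occupies heights $[i-1,i]$ and has $n$ slots $j=1,\dots,n$; a block in slot $j$ of an odd level $i$ is $[0,n]\times[j-1,j]\times[i-1,i]$, and a block in slot $j$ of an even level $i$ is $[j-1,j]\times[0,n]\times[i-1,i]$. Slots $j,j'$ are adjacent if $|j-j'|=1$. The genus of a configuration is the genus of the boundary surface of the union of its blocks (a connected closed polyhedral surface). The configuration uses $nk$ blocks in total. *)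

theory Defs
  imports Complex_Main "HOL-Library.Product_Plus"
begin

text \<open>Lattice points of R^3 (integer coordinates); a unit cube is named by its
lower corner.  Axis 0 = x, 1 = y, 2 = z.\<close>

type_synonym pt = "int \<times> int \<times> int"

definition unitv :: "nat \<Rightarrow> pt" where
  "unitv a = (if a = 0 then (1,0,0) else if a = 1 then (0,1,0) else (0,0,1))"

definition axes :: "nat set" where "axes = {0,1,2}"

text \<open>Unit cubes occupied by the block in slot j (1..n) of level i (1-based):
odd level: [0,n] x [j-1,j] x [i-1,i]; even level: [j-1,j] x [0,n] x [i-1,i].\<close>

definition block_cubes :: "nat \<Rightarrow> nat \<Rightarrow> nat \<Rightarrow> pt set" where
  "block_cubes n i j =
     (if odd i then {(x, int j - 1, int i - 1) | x. 0 \<le> x \<and> x < int n}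
      else {(int j - 1, y, int i - 1) | y. 0 \<le> y \<and> y < int n})"

definition config_cubes :: "nat \<Rightarrow> (nat \<times> nat) set \<Rightarrow> pt set" where
  "config_cubes n B = (\<Union>(i,j)\<in>B. block_cubes n i j)"

text \<open>A unit square (q,b): the square in the plane x_b = q_b with lower corner q,
spanned by the two axes different from b.  It separates the cubes with lower
corners q and q - e_b.\<close>

definition boundary_faces :: "pt set \<Rightarrow> (pt \<times> nat) set" where
  "boundary_faces C = {(q,b). b \<in> axes \<and> ((q \<in> C) \<noteq> (q - unitv b \<in> C))}"

definition face_vertices :: "pt \<times> nat \<Rightarrow> pt set" where
  "face_vertices f = (case f of (q,b) \<Rightarrow>
     {q + sum unitv S | S. S \<subseteq> axes - {b}})"

text \<open>A unit edge (p,a) is the segment from p to p + e_a.\<close>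

definition face_edges :: "pt \<times> nat \<Rightarrow> (pt \<times> nat) set" where
  "face_edges f = (case f of (q,b) \<Rightarrow>
     {(q + sum unitv S, a) | a S. a \<in> axes - {b} \<and> S \<subseteq> axes - {a,b}})"

definition boundary_euler_char :: "pt set \<Rightarrow> int" where
  "boundary_euler_char C =
     int (card (\<Union>f\<in>boundary_faces C. face_vertices f))
   - int (card (\<Union>f\<in>boundary_faces C. face_edges f))
   + int (card (boundary_faces C))"

text \<open>Genus of the (connected, closed, orientable) boundary surface: chi = 2 - 2g.\<close>

definition boundary_genus :: "pt set \<Rightarrow> real" where
  "boundary_genus C = (2 - real_of_int (boundary_euler_char C)) / 2"

definition level :: "(nat \<times> nat) set \<Rightarrow> nat \<Rightarrow> nat set" where
  "level B i = {j. (i,j) \<in> B}"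

definition is_Q :: "nat \<Rightarrow> nat \<Rightarrow> (nat \<times> nat) set \<Rightarrow> bool" where
  "is_Q n k B \<longleftrightarrow>
     B \<subseteq> {1..2*k-1} \<times> {1..n} \<and>
     (\<exists>a. level B (2*k-1) = {a..<a + n div 2}) \<and>
     level B (2*k-2) = {1..n} \<and>
     (\<forall>i\<in>{1..2*k-3}. card (level B i) = n div 2 \<and>
        (\<forall>j\<in>level B i. \<forall>j'\<in>level B i. j' \<noteq> j + 1))"

end

theory Submission
  imports Defs
begin


lemma sub2_image: "{g S | S. S \<subseteq> {u,v}} = {g {}, g {u}, g {v}, g {u,v}}"
proof -
  have "{g S | S. S \<subseteq> {u,v}} = g ` Pow {u,v}" by auto
  then show ?thesis by (auto simp: Pow_insert)
qed

lemma unitv_simps[simp]: "unitv 0 = (1,0,0)" "unitv 1 = (0,1,0)" "unitv (Suc 0) = (0,1,0)" "unitv 2 = (0,0,1)"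
  by (auto simp: unitv_def)

lemma fv0: "face_vertices ((a,b,c),0) = {(a,b,c),(a,b+1,c),(a,b,c+1),(a,b+1,c+1)}"
proof -
  have "axes - {0} = {1,2::nat}" by (auto simp: axes_def)
  then show ?thesis unfolding face_vertices_def by (simp add: sub2_image)
qed
lemma fv1: "face_vertices ((a,b,c),1) = {(a,b,c),(a+1,b,c),(a,b,c+1),(a+1,b,c+1)}"
proof -
  have "axes - {1} = {0,2::nat}" by (auto simp: axes_def)
  then show ?thesis unfolding face_vertices_def by (simp add: sub2_image)
qed
lemma fv2: "face_vertices ((a,b,c),2) = {(a,b,c),(a+1,b,c),(a,b+1,c),(a+1,b+1,c)}"
proof -
  have "axes - {2} = {0,1::nat}" by (auto simp: axes_def)
  then show ?thesis unfolding face_vertices_def by (simp add: sub2_image)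
qed

lemma set_pair_image: "{f a S | a S. P a S} = (\<lambda>(a,S). f a S) ` {(a,S). P a S}"
  by auto

lemma fe0: "face_edges ((a,b,c),0) = {((a,b,c),1),((a,b,c+1),1),((a,b,c),2),((a,b+1,c),2)}"
proof -
  have e: "{(a'::nat,S). a' \<in> axes - {0} \<and> S \<subseteq> axes - {a',0}} = {(1,{}),(1,{2}),(2,{}),(2,{1})}"
    unfolding axes_def by auto
  show ?thesis unfolding face_edges_def prod.case set_pair_image e by simp
qed
lemma fe1: "face_edges ((a,b,c),1) = {((a,b,c),0),((a,b,c+1),0),((a,b,c),2),((a+1,b,c),2)}"
proof -
  have e: "{(a'::nat,S). a' \<in> axes - {1} \<and> S \<subseteq> axes - {a',1}} = {(0,{}),(0,{2}),(2,{}),(2,{0})}"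
    unfolding axes_def by auto
  show ?thesis unfolding face_edges_def prod.case set_pair_image e by simp
qed
lemma fe2: "face_edges ((a,b,c),2) = {((a,b,c),0),((a,b+1,c),0),((a,b,c),1),((a+1,b,c),1)}"
proof -
  have e: "{(a'::nat,S). a' \<in> axes - {2} \<and> S \<subseteq> axes - {a',2}} = {(0,{}),(0,{1}),(1,{}),(1,{0})}"
    unfolding axes_def by auto
  show ?thesis unfolding face_edges_def prod.case set_pair_image e by simp
qed

lemmas fv1' = fv1[unfolded One_nat_def]
lemmas fe1' = fe1[unfolded One_nat_def]

definition VS :: "pt set \<Rightarrow> pt set" where "VS C = (\<Union>f\<in>boundary_faces C. face_vertices f)"
definition ES :: "pt set \<Rightarrow> (pt \<times> nat) set" where "ES C = (\<Union>f\<in>boundary_faces C. face_edges f)"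

lemma bf_iff: "((q,\<beta>) \<in> boundary_faces C) \<longleftrightarrow> \<beta> \<in> {0,1,2} \<and> (q\<in>C) \<noteq> (q - unitv \<beta> \<in> C)"
  by (simp add: boundary_faces_def axes_def)

definition star8 :: "int \<Rightarrow> int \<Rightarrow> int \<Rightarrow> pt set" where
  "star8 x y z = {(x,y,z),(x-1,y,z),(x,y-1,z),(x-1,y-1,z),(x,y,z-1),(x-1,y,z-1),(x,y-1,z-1),(x-1,y-1,z-1)}"

lemma VS_iff: "(x,y,z) \<in> VS C \<longleftrightarrow> (\<exists>u\<in>star8 x y z. u\<in>C) \<and> (\<exists>u\<in>star8 x y z. u\<notin>C)"
  (is "?L \<longleftrightarrow> ?R")
proof
  assume ?L
  then obtain a b c \<beta> where f: "((a,b,c),\<beta>) \<in> boundary_faces C" and v: "(x,y,z) \<in> face_vertices ((a,b,c),\<beta>)"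
    unfolding VS_def by auto
  from f have d: "((a,b,c)\<in>C) \<noteq> ((a,b,c) - unitv \<beta> \<in> C)" and "\<beta> = 0 \<or> \<beta> = 1 \<or> \<beta> = 2" by (auto simp: bf_iff)
  have mem: "\<And>a b c. (a,b,c) \<in> star8 x y z \<longleftrightarrow> (a = x \<or> a = x - 1) \<and> (b = y \<or> b = y - 1) \<and> (c = z \<or> c = z - 1)"
    unfolding star8_def insert_iff singleton_iff prod.inject empty_iff by blast
  have "(a,b,c) \<in> star8 x y z \<and> (a,b,c) - unitv \<beta> \<in> star8 x y z"
  proof -
    consider "\<beta> = 0" | "\<beta> = 1" | "\<beta> = 2" using \<open>\<beta> = 0 \<or> \<beta> = 1 \<or> \<beta> = 2\<close> by blast
    then show ?thesis
    proof cases
      case 1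
      with v have "x - a = 0 \<and> (y - b = 0 \<or> y - b = 1) \<and> (z - c = 0 \<or> z - c = 1)" by (auto simp: fv0)
      then show ?thesis by (simp only: 1 unitv_simps diff_Pair mem) presburger
    next
      case 2
      with v have "(x - a = 0 \<or> x - a = 1) \<and> y - b = 0 \<and> (z - c = 0 \<or> z - c = 1)" by (auto simp: fv1 fv1')
      then show ?thesis by (simp only: 2 unitv_simps diff_Pair mem) presburger
    next
      case 3
      with v have "(x - a = 0 \<or> x - a = 1) \<and> (y - b = 0 \<or> y - b = 1) \<and> z - c = 0" by (auto simp: fv2)
      then show ?thesis by (simp only: 3 unitv_simps diff_Pair mem) presburger
    qed
  qed
  with d show ?R by blast
next
  assume r: ?R
  show ?L
  proof (rule ccontr)
    assume nL: "\<not> ?L"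
    have h: "(q\<in>C) = (q - unitv \<beta> \<in> C)" if "\<beta> \<in> {0,1,2}" "(x,y,z) \<in> face_vertices (q,\<beta>)" for q \<beta>
    proof (rule ccontr)
      assume "(q\<in>C) \<noteq> (q - unitv \<beta> \<in> C)"
      with that have "(x,y,z) \<in> VS C" unfolding VS_def by (auto simp: bf_iff)
      with nL show False by simp
    qed
    have "((x,y,z)\<in>C) = ((x-1,y,z)\<in>C)" using h[of 0 "(x,y,z)"] by (simp add: fv0)
    moreover have "((x,y-1,z)\<in>C) = ((x-1,y-1,z)\<in>C)" using h[of 0 "(x,y-1,z)"] by (simp add: fv0)
    moreover have "((x,y,z-1)\<in>C) = ((x-1,y,z-1)\<in>C)" using h[of 0 "(x,y,z-1)"] by (simp add: fv0)
    moreover have "((x,y-1,z-1)\<in>C) = ((x-1,y-1,z-1)\<in>C)" using h[of 0 "(x,y-1,z-1)"] by (simp add: fv0)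
    moreover have "((x,y,z)\<in>C) = ((x,y-1,z)\<in>C)" using h[of 1 "(x,y,z)"] by (simp add: fv1 fv1')
    moreover have "((x,y,z-1)\<in>C) = ((x,y-1,z-1)\<in>C)" using h[of 1 "(x,y,z-1)"] by (simp add: fv1 fv1')
    moreover have "((x,y,z)\<in>C) = ((x,y,z-1)\<in>C)" using h[of 2 "(x,y,z)"] by (simp add: fv2)
    moreover have "((x-1,y,z)\<in>C) = ((x-1,y,z-1)\<in>C)" using h[of 2 "(x-1,y,z)"] by (simp add: fv2)
    moreover have "((x,y-1,z)\<in>C) = ((x,y-1,z-1)\<in>C)" using h[of 2 "(x,y-1,z)"] by (simp add: fv2)
    moreover have "((x-1,y-1,z)\<in>C) = ((x-1,y-1,z-1)\<in>C)" using h[of 2 "(x-1,y-1,z)"] by (simp add: fv2)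
    ultimately have all: "\<forall>u\<in>star8 x y z. (u\<in>C) = ((x,y,z)\<in>C)"
      unfolding star8_def ball_simps by blast
    from r obtain u w where "u \<in> star8 x y z" "u \<in> C" "w \<in> star8 x y z" "w \<notin> C" by blast
    with all show False by blast
  qed
qed

definition stare0 :: "int \<Rightarrow> int \<Rightarrow> int \<Rightarrow> pt set" where
  "stare0 x y z = {(x,y,z),(x,y-1,z),(x,y,z-1),(x,y-1,z-1)}"

lemma ES0_iff: "((x,y,z),0) \<in> ES C \<longleftrightarrow> (\<exists>u\<in>stare0 x y z. u\<in>C) \<and> (\<exists>u\<in>stare0 x y z. u\<notin>C)"
  (is "?L \<longleftrightarrow> ?R")
proof
  have mem: "\<And>a b c. (a,b,c) \<in> stare0 x y z \<longleftrightarrow> a = x \<and> (b = y \<or> b = y - 1) \<and> (c = z \<or> c = z - 1)"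
    unfolding stare0_def insert_iff singleton_iff prod.inject empty_iff by blast
  assume ?L
  then obtain a b c \<beta> where f: "((a,b,c),\<beta>) \<in> boundary_faces C" and v: "((x,y,z),0) \<in> face_edges ((a,b,c),\<beta>)"
    unfolding ES_def by auto
  from f have d: "((a,b,c)\<in>C) \<noteq> ((a,b,c) - unitv \<beta> \<in> C)" and b3: "\<beta> = 0 \<or> \<beta> = 1 \<or> \<beta> = 2" by (auto simp: bf_iff)
  have "(a,b,c) \<in> stare0 x y z \<and> (a,b,c) - unitv \<beta> \<in> stare0 x y z"
  proof -
    have ?thesis if "\<beta> = 0"
      using v that by (simp add: fe0 fe1 fe2 fe1' mem; presburger)
    moreover have ?thesis if "\<beta> = 1"
      using v that by (simp add: fe0 fe1 fe2 fe1' mem; presburger)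
    moreover have ?thesis if "\<beta> = 2"
      using v that by (simp add: fe0 fe1 fe2 fe1' mem; presburger)
    ultimately show ?thesis using b3 by blast
  qed
  with d show ?R by blast
next
  assume r: ?R
  show ?L
  proof (rule ccontr)
    assume nL: "\<not> ?L"
    have h: "(q\<in>C) = (q - unitv \<beta> \<in> C)" if "\<beta> \<in> {0,1,2}" "((x,y,z),0) \<in> face_edges (q,\<beta>)" for q \<beta>
    proof (rule ccontr)
      assume "(q\<in>C) \<noteq> (q - unitv \<beta> \<in> C)"
      with that have "((x,y,z),0) \<in> ES C" unfolding ES_def by (auto simp: bf_iff)
      with nL show False by simp
    qed
    have "((x,y,z)\<in>C) = ((x,y-1,z)\<in>C)" using h[of 1 "(x,y,z)"] by (simp add: fe0 fe1 fe2 fe1')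
    moreover have "((x,y,z-1)\<in>C) = ((x,y-1,z-1)\<in>C)" using h[of 1 "(x,y,z-1)"] by (simp add: fe0 fe1 fe2 fe1')
    moreover have "((x,y,z)\<in>C) = ((x,y,z-1)\<in>C)" using h[of 2 "(x,y,z)"] by (simp add: fe0 fe1 fe2 fe1')
    moreover have "((x,y-1,z)\<in>C) = ((x,y-1,z-1)\<in>C)" using h[of 2 "(x,y-1,z)"] by (simp add: fe0 fe1 fe2 fe1')
    ultimately have all: "\<forall>u\<in>stare0 x y z. (u\<in>C) = ((x,y,z)\<in>C)"
      unfolding stare0_def ball_simps by blast
    from r obtain u w where "u \<in> stare0 x y z" "u \<in> C" "w \<in> stare0 x y z" "w \<notin> C" by blast
    with all show False by blast
  qed
qed

definition stare1 :: "int \<Rightarrow> int \<Rightarrow> int \<Rightarrow> pt set" where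
  "stare1 x y z = {(x,y,z),(x-1,y,z),(x,y,z-1),(x-1,y,z-1)}"

lemma ES1_iff: "((x,y,z),1) \<in> ES C \<longleftrightarrow> (\<exists>u\<in>stare1 x y z. u\<in>C) \<and> (\<exists>u\<in>stare1 x y z. u\<notin>C)"
  (is "?L \<longleftrightarrow> ?R")
proof
  have mem: "\<And>a b c. (a,b,c) \<in> stare1 x y z \<longleftrightarrow> (a = x \<or> a = x - 1) \<and> b = y \<and> (c = z \<or> c = z - 1)"
    unfolding stare1_def insert_iff singleton_iff prod.inject empty_iff by blast
  assume ?L
  then obtain a b c \<beta> where f: "((a,b,c),\<beta>) \<in> boundary_faces C" and v: "((x,y,z),1) \<in> face_edges ((a,b,c),\<beta>)"
    unfolding ES_def by auto
  from f have d: "((a,b,c)\<in>C) \<noteq> ((a,b,c) - unitv \<beta> \<in> C)" and b3: "\<beta> = 0 \<or> \<beta> = 1 \<or> \<beta> = 2" by (auto simp: bf_iff)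
  have "(a,b,c) \<in> stare1 x y z \<and> (a,b,c) - unitv \<beta> \<in> stare1 x y z"
  proof -
    have ?thesis if "\<beta> = 0"
      using v that by (simp add: fe0 fe1 fe2 fe1' mem; presburger)
    moreover have ?thesis if "\<beta> = 1"
      using v that by (simp add: fe0 fe1 fe2 fe1' mem; presburger)
    moreover have ?thesis if "\<beta> = 2"
      using v that by (simp add: fe0 fe1 fe2 fe1' mem; presburger)
    ultimately show ?thesis using b3 by blast
  qed
  with d show ?R by blast
next
  assume r: ?R
  show ?L
  proof (rule ccontr)
    assume nL: "\<not> ?L"
    have h: "(q\<in>C) = (q - unitv \<beta> \<in> C)" if "\<beta> \<in> {0,1,2}" "((x,y,z),1) \<in> face_edges (q,\<beta>)" for q \<beta>
    proof (rule ccontr)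
      assume "(q\<in>C) \<noteq> (q - unitv \<beta> \<in> C)"
      with that have "((x,y,z),1) \<in> ES C" unfolding ES_def by (auto simp: bf_iff)
      with nL show False by simp
    qed
    have "((x,y,z)\<in>C) = ((x-1,y,z)\<in>C)" using h[of 0 "(x,y,z)"] by (simp add: fe0 fe1 fe2 fe1')
    moreover have "((x,y,z-1)\<in>C) = ((x-1,y,z-1)\<in>C)" using h[of 0 "(x,y,z-1)"] by (simp add: fe0 fe1 fe2 fe1')
    moreover have "((x,y,z)\<in>C) = ((x,y,z-1)\<in>C)" using h[of 2 "(x,y,z)"] by (simp add: fe0 fe1 fe2 fe1')
    moreover have "((x-1,y,z)\<in>C) = ((x-1,y,z-1)\<in>C)" using h[of 2 "(x-1,y,z)"] by (simp add: fe0 fe1 fe2 fe1')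
    ultimately have all: "\<forall>u\<in>stare1 x y z. (u\<in>C) = ((x,y,z)\<in>C)"
      unfolding stare1_def ball_simps by blast
    from r obtain u w where "u \<in> stare1 x y z" "u \<in> C" "w \<in> stare1 x y z" "w \<notin> C" by blast
    with all show False by blast
  qed
qed

definition stare2 :: "int \<Rightarrow> int \<Rightarrow> int \<Rightarrow> pt set" where
  "stare2 x y z = {(x,y,z),(x-1,y,z),(x,y-1,z),(x-1,y-1,z)}"

lemma ES2_iff: "((x,y,z),2) \<in> ES C \<longleftrightarrow> (\<exists>u\<in>stare2 x y z. u\<in>C) \<and> (\<exists>u\<in>stare2 x y z. u\<notin>C)"
  (is "?L \<longleftrightarrow> ?R")
proof
  have mem: "\<And>a b c. (a,b,c) \<in> stare2 x y z \<longleftrightarrow> (a = x \<or> a = x - 1) \<and> (b = y \<or> b = y - 1) \<and> c = z"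
    unfolding stare2_def insert_iff singleton_iff prod.inject empty_iff by blast
  assume ?L
  then obtain a b c \<beta> where f: "((a,b,c),\<beta>) \<in> boundary_faces C" and v: "((x,y,z),2) \<in> face_edges ((a,b,c),\<beta>)"
    unfolding ES_def by auto
  from f have d: "((a,b,c)\<in>C) \<noteq> ((a,b,c) - unitv \<beta> \<in> C)" and b3: "\<beta> = 0 \<or> \<beta> = 1 \<or> \<beta> = 2" by (auto simp: bf_iff)
  have "(a,b,c) \<in> stare2 x y z \<and> (a,b,c) - unitv \<beta> \<in> stare2 x y z"
  proof -
    have ?thesis if "\<beta> = 0"
      using v that by (simp add: fe0 fe1 fe2 fe1' mem; presburger)
    moreover have ?thesis if "\<beta> = 1"
      using v that by (simp add: fe0 fe1 fe2 fe1' mem; presburger)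
    moreover have ?thesis if "\<beta> = 2"
      using v that by (simp add: fe0 fe1 fe2 fe1' mem; presburger)
    ultimately show ?thesis using b3 by blast
  qed
  with d show ?R by blast
next
  assume r: ?R
  show ?L
  proof (rule ccontr)
    assume nL: "\<not> ?L"
    have h: "(q\<in>C) = (q - unitv \<beta> \<in> C)" if "\<beta> \<in> {0,1,2}" "((x,y,z),2) \<in> face_edges (q,\<beta>)" for q \<beta>
    proof (rule ccontr)
      assume "(q\<in>C) \<noteq> (q - unitv \<beta> \<in> C)"
      with that have "((x,y,z),2) \<in> ES C" unfolding ES_def by (auto simp: bf_iff)
      with nL show False by simp
    qed
    have "((x,y,z)\<in>C) = ((x-1,y,z)\<in>C)" using h[of 0 "(x,y,z)"] by (simp add: fe0 fe1 fe2 fe1')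
    moreover have "((x,y-1,z)\<in>C) = ((x-1,y-1,z)\<in>C)" using h[of 0 "(x,y-1,z)"] by (simp add: fe0 fe1 fe2 fe1')
    moreover have "((x,y,z)\<in>C) = ((x,y-1,z)\<in>C)" using h[of 1 "(x,y,z)"] by (simp add: fe0 fe1 fe2 fe1')
    moreover have "((x-1,y,z)\<in>C) = ((x-1,y-1,z)\<in>C)" using h[of 1 "(x-1,y,z)"] by (simp add: fe0 fe1 fe2 fe1')
    ultimately have all: "\<forall>u\<in>stare2 x y z. (u\<in>C) = ((x,y,z)\<in>C)"
      unfolding stare2_def ball_simps by blast
    from r obtain u w where "u \<in> stare2 x y z" "u \<in> C" "w \<in> stare2 x y z" "w \<notin> C" by blast
    with all show False by blast
  qed
qed

lemma ES_other: "a \<notin> {0,1,2} \<Longrightarrow> (p,a) \<notin> ES C"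
proof
  assume a: "a \<notin> {0,1,2}" and "(p,a) \<in> ES C"
  then obtain q \<beta> where f: "(q,\<beta>) \<in> boundary_faces C" and v: "(p,a) \<in> face_edges (q,\<beta>)"
    unfolding ES_def by auto
  obtain a1 b1 c1 where q: "q = (a1,b1,c1)" by (cases q) auto
  from f have "\<beta> = 0 \<or> \<beta> = 1 \<or> \<beta> = 2" by (auto simp: bf_iff)
  then show False using v a unfolding q by (auto simp: fe0 fe1 fe2 fe1')
qed



definition hat :: "int set \<Rightarrow> int set" where "hat X = X \<union> (\<lambda>x. x+1) ` X"
definition chk :: "int set \<Rightarrow> int set" where "chk X = X \<inter> (\<lambda>x. x+1) ` X"

lemma img_plus1: "x \<in> (\<lambda>x::int. x+1) ` X \<longleftrightarrow> x - 1 \<in> X"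
  by (auto simp: image_iff intro: bexI[of _ "x - 1"])

lemma hat_iff: "x \<in> hat X \<longleftrightarrow> x \<in> X \<or> x - 1 \<in> X"
  by (simp add: hat_def img_plus1)
lemma chk_iff: "x \<in> chk X \<longleftrightarrow> x \<in> X \<and> x - 1 \<in> X"
  by (simp add: chk_def img_plus1)

lemma finite_hat[simp]: "finite X \<Longrightarrow> finite (hat X)" by (simp add: hat_def)
lemma finite_chk[simp]: "finite X \<Longrightarrow> finite (chk X)" by (simp add: chk_def)
lemma chk_sub_hat: "chk X \<subseteq> hat X" by (auto simp: hat_def chk_def)
lemma chk_sub: "chk X \<subseteq> X" by (auto simp: chk_def)
lemma sub_hat: "X \<subseteq> hat X" by (auto simp: hat_def)

lemma hat_chk_card: assumes "finite X" shows "card (hat X) + card (chk X) = 2 * card X"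
proof -
  have "card ((\<lambda>x::int. x+1) ` X) = card X" by (rule card_image) (simp add: inj_on_def)
  with card_Un_Int[of X "(\<lambda>x. x+1) ` X"] assms show ?thesis
    by (simp add: hat_def chk_def)
qed

definition SA :: "int set \<Rightarrow> int set \<Rightarrow> int set \<Rightarrow> int set \<Rightarrow> int set \<Rightarrow> int set \<Rightarrow> int" where
  "SA A B C D E F = int (card A * card B) + int (card C * card D) - int (card (A\<inter>C) * card (B\<inter>D)) - int (card E * card F)"

lemma cnt:
  assumes "finite A" "finite B" "finite C" "finite D" "E \<subseteq> A" "F \<subseteq> B"
  shows "finite {(x,y). (x\<in>A \<and> y\<in>B \<or> x\<in>C \<and> y\<in>D) \<and> \<not>(x\<in>E \<and> y\<in>F)}"
    and "int (card {(x,y). (x\<in>A \<and> y\<in>B \<or> x\<in>C \<and> y\<in>D) \<and> \<not>(x\<in>E \<and> y\<in>F)}) = SA A B C D E F"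
proof -
  have eq: "{(x,y). (x\<in>A \<and> y\<in>B \<or> x\<in>C \<and> y\<in>D) \<and> \<not>(x\<in>E \<and> y\<in>F)} = (A \<times> B \<union> C \<times> D) - E \<times> F"
    by auto
  have fU: "finite (A \<times> B \<union> C \<times> D)" using assms by simp
  have sub: "E \<times> F \<subseteq> A \<times> B \<union> C \<times> D" using assms by auto
  have fE: "finite (E \<times> F)" using sub fU finite_subset by blast
  show "finite {(x,y). (x\<in>A \<and> y\<in>B \<or> x\<in>C \<and> y\<in>D) \<and> \<not>(x\<in>E \<and> y\<in>F)}" unfolding eq using fU by simp
  have c1: "card ((A \<times> B \<union> C \<times> D) - E \<times> F) = card (A \<times> B \<union> C \<times> D) - card (E \<times> F)"
    using card_Diff_subset[OF fE sub] .
  have c2: "card (E \<times> F) \<le> card (A \<times> B \<union> C \<times> D)" using card_mono[OF fU sub] .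
  have c3: "card (A \<times> B \<union> C \<times> D) + card ((A \<times> B) \<inter> (C \<times> D)) = card (A \<times> B) + card (C \<times> D)"
    using card_Un_Int[of "A \<times> B" "C \<times> D"] assms by simp
  have c4: "(A \<times> B) \<inter> (C \<times> D) = (A \<inter> C) \<times> (B \<inter> D)" by auto
  have c5: "card (E \<times> F) = card E * card F" by (simp add: card_cartesian_product)
  show "int (card {(x,y). (x\<in>A \<and> y\<in>B \<or> x\<in>C \<and> y\<in>D) \<and> \<not>(x\<in>E \<and> y\<in>F)}) = SA A B C D E F"
  proof -
    have c3': "int (card (A \<times> B \<union> C \<times> D)) + int (card (A\<inter>C)) * int (card (B\<inter>D)) = int (card A) * int (card B) + int (card C) * int (card D)"
      using arg_cong[OF c3, of int] c4 by (simp add: card_cartesian_product)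
    show ?thesis unfolding eq c1 SA_def using c2 c3' c5 by (simp add: of_nat_diff)
  qed
qed

lemma card_slices:
  fixes \<Phi> :: "int \<Rightarrow> int \<Rightarrow> int \<Rightarrow> bool"
  assumes rng: "\<And>x y z. \<Phi> x y z \<Longrightarrow> 0 \<le> z \<and> z < int K"
    and fin: "\<And>z. finite {(x,y). \<Phi> x y (int z)}"
  shows "finite {(x,y,z). \<Phi> x y z}" "card {(x,y,z). \<Phi> x y z} = (\<Sum>z<K. card {(x,y). \<Phi> x y (int z)})"
proof -
  let ?f = "\<lambda>z::nat. \<lambda>(x::int,y::int). (x,y,int z)"
  have eq: "{(x,y,z). \<Phi> x y z} = (\<Union>z\<in>{..<K}. ?f z ` {(x,y). \<Phi> x y (int z)})"
  proof
    show "{(x,y,z). \<Phi> x y z} \<subseteq> (\<Union>z\<in>{..<K}. ?f z ` {(x,y). \<Phi> x y (int z)})"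
    proof
      fix p assume "p \<in> {(x,y,z). \<Phi> x y z}"
      then obtain x y z where p: "p = (x,y,z)" and ph: "\<Phi> x y z" by auto
      from rng[OF ph] have z: "z = int (nat z)" "nat z < K" by auto
      have "p \<in> ?f (nat z) ` {(x,y). \<Phi> x y (int (nat z))}"
        using ph z unfolding p by (auto simp: image_iff)
      with z show "p \<in> (\<Union>z\<in>{..<K}. ?f z ` {(x,y). \<Phi> x y (int z)})" by blast
    qed
  qed auto
  show "finite {(x,y,z). \<Phi> x y z}" unfolding eq using fin by auto
  have "card (\<Union>z\<in>{..<K}. ?f z ` {(x,y). \<Phi> x y (int z)}) = (\<Sum>z<K. card (?f z ` {(x,y). \<Phi> x y (int z)}))"
    by (rule card_UN_disjoint) (use fin in auto)
  also have "\<dots> = (\<Sum>z<K. card {(x,y). \<Phi> x y (int z)})"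
    by (rule sum.cong) (auto intro!: card_image simp: inj_on_def)
  finally show "card {(x,y,z). \<Phi> x y z} = (\<Sum>z<K. card {(x,y). \<Phi> x y (int z)})" unfolding eq .
qed


lemma card3:
  assumes "finite A0" "finite A1" "finite A2"
    and S: "S = (\<lambda>p. (p,0::nat)) ` A0 \<union> (\<lambda>p. (p,1)) ` A1 \<union> (\<lambda>p. (p,2)) ` A2"
  shows "card S = card A0 + card A1 + card A2"
proof -
  have i0: "card ((\<lambda>p. (p,0::nat)) ` A0) = card A0" by (rule card_image) (simp add: inj_on_def)
  have i1: "card ((\<lambda>p. (p,1::nat)) ` A1) = card A1" by (rule card_image) (simp add: inj_on_def)
  have i2: "card ((\<lambda>p. (p,2::nat)) ` A2) = card A2" by (rule card_image) (simp add: inj_on_def)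
  have "card ((\<lambda>p. (p,0::nat)) ` A0 \<union> (\<lambda>p. (p,1)) ` A1) = card ((\<lambda>p. (p,0::nat)) ` A0) + card ((\<lambda>p. (p,1::nat)) ` A1)"
    by (rule card_Un_disjoint) (use assms in auto)
  moreover have "card ((\<lambda>p. (p,0::nat)) ` A0 \<union> (\<lambda>p. (p,1)) ` A1 \<union> (\<lambda>p. (p,2)) ` A2) =
     card ((\<lambda>p. (p,0::nat)) ` A0 \<union> (\<lambda>p. (p,1)) ` A1) + card ((\<lambda>p. (p,2::nat)) ` A2)"
    by (rule card_Un_disjoint) (use assms in auto)
  ultimately show ?thesis unfolding S using i0 i1 i2 by simp
qed

definition planeH :: "int set \<Rightarrow> int set \<Rightarrow> int set \<Rightarrow> int set \<Rightarrow> int" where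
  "planeH P1 Q1 P2 Q2 =
     SA (hat P1) (hat Q1) (hat P2) (hat Q2) (chk P1 \<inter> chk P2) (chk Q1 \<inter> chk Q2)
   - SA P1 (hat Q1) P2 (hat Q2) (P1 \<inter> P2) (chk Q1 \<inter> chk Q2)
   - SA (hat P1) Q1 (hat P2) Q2 (chk P1 \<inter> chk P2) (Q1 \<inter> Q2)
   + SA P1 Q1 P2 Q2 (P1 \<inter> P2) (Q1 \<inter> Q2)"

definition layerL :: "int set \<Rightarrow> int set \<Rightarrow> int" where
  "layerL P Q = SA (hat P) Q {} {} (chk P) Q + SA P (hat Q) {} {} P (chk Q) - SA (hat P) (hat Q) {} {} (chk P) (chk Q)"

lemma layerL_zero: assumes "finite P" "finite Q" shows "layerL P Q = 0"
proof -
  have a: "int (card (hat P)) = 2 * int (card P) - int (card (chk P))" using hat_chk_card[OF assms(1)] by linarith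
  have b: "int (card (hat Q)) = 2 * int (card Q) - int (card (chk Q))" using hat_chk_card[OF assms(2)] by linarith
  show ?thesis unfolding layerL_def SA_def by (simp add: a b algebra_simps)
qed

lemma count_type:
  fixes \<Phi> :: "int \<Rightarrow> int \<Rightarrow> int \<Rightarrow> bool" and A B C D E F :: "nat \<Rightarrow> int set"
  assumes rng: "\<And>x y z. \<Phi> x y z \<Longrightarrow> 0 \<le> z \<and> z < int K"
    and sl: "\<And>x y z. \<Phi> x y (int z) \<longleftrightarrow> (x\<in>A z \<and> y\<in>B z \<or> x\<in>C z \<and> y\<in>D z) \<and> \<not>(x\<in>E z \<and> y\<in>F z)"
    and fin: "\<And>z. finite (A z)" "\<And>z. finite (B z)" "\<And>z. finite (C z)" "\<And>z. finite (D z)"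
    and sub: "\<And>z. E z \<subseteq> A z" "\<And>z. F z \<subseteq> B z"
  shows "finite {(x,y,z). \<Phi> x y z}"
    "int (card {(x,y,z). \<Phi> x y z}) = (\<Sum>z<K. SA (A z) (B z) (C z) (D z) (E z) (F z))"
proof -
  have eq: "{(x,y). \<Phi> x y (int z)} = {(x,y). (x\<in>A z \<and> y\<in>B z \<or> x\<in>C z \<and> y\<in>D z) \<and> \<not>(x\<in>E z \<and> y\<in>F z)}" for z
    using sl by auto
  have f: "finite {(x,y). \<Phi> x y (int z)}" for z
    unfolding eq by (rule cnt(1)) (use fin sub in auto)
  show "finite {(x,y,z). \<Phi> x y z}" by (rule card_slices(1)[of \<Phi> K, OF rng f])
  have "int (card {(x,y,z). \<Phi> x y z}) = int (\<Sum>z<K. card {(x,y). \<Phi> x y (int z)})"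
    using card_slices(2)[of \<Phi> K, OF rng f] by simp
  also have "\<dots> = (\<Sum>z<K. int (card {(x,y). \<Phi> x y (int z)}))" by simp
  also have "\<dots> = (\<Sum>z<K. SA (A z) (B z) (C z) (D z) (E z) (F z))"
    by (rule sum.cong) (simp_all only: eq cnt(2) fin sub)
  finally show "int (card {(x,y,z). \<Phi> x y z}) = (\<Sum>z<K. SA (A z) (B z) (C z) (D z) (E z) (F z))" .
qed

context
  fixes C :: "pt set" and P Q :: "nat \<Rightarrow> int set" and K :: nat
  assumes cm: "\<And>x y z. (x,y,z) \<in> C \<longleftrightarrow> x \<in> P (nat (z+1)) \<and> y \<in> Q (nat (z+1))"
    and P0: "P 0 = {}" and PK: "\<And>i. i \<ge> K \<Longrightarrow> P i = {}"
    and fP: "\<And>i. finite (P i)" and fQ: "\<And>i. finite (Q i)"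
begin

lemma cubeZ: "(x,y,int z - 1) \<in> C \<longleftrightarrow> x \<in> P z \<and> y \<in> Q z"
  by (simp add: cm)
lemma cubeS: "(x,y,int z) \<in> C \<longleftrightarrow> x \<in> P (Suc z) \<and> y \<in> Q (Suc z)"
proof -
  have "nat (int z + 1) = Suc z" by (simp add: nat_eq_iff)
  then show ?thesis by (simp add: cm)
qed

lemma cube_rng: "(a,b,c) \<in> C \<Longrightarrow> 0 \<le> c \<and> c + 2 \<le> int K"
proof -
  assume "(a,b,c) \<in> C"
  then have "P (nat (c+1)) \<noteq> {}" using cm by auto
  then have "nat (c+1) \<noteq> 0" "\<not> nat (c+1) \<ge> K" using P0 PK by auto
  then show ?thesis by linarith
qed

lemmas cube_simps = cubeZ cubeS hat_iff chk_iff Int_iff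

lemma V_slice: "(x,y,int z) \<in> VS C \<longleftrightarrow>
  (x \<in> hat (P z) \<and> y \<in> hat (Q z) \<or> x \<in> hat (P (Suc z)) \<and> y \<in> hat (Q (Suc z))) \<and>
  \<not> (x \<in> chk (P z) \<inter> chk (P (Suc z)) \<and> y \<in> chk (Q z) \<inter> chk (Q (Suc z)))"
  unfolding VS_iff star8_def bex_simps ball_simps cube_simps by blast

lemma E0_slice: "((x,y,int z),0) \<in> ES C \<longleftrightarrow>
  (x \<in> P z \<and> y \<in> hat (Q z) \<or> x \<in> P (Suc z) \<and> y \<in> hat (Q (Suc z))) \<and>
  \<not> (x \<in> P z \<inter> P (Suc z) \<and> y \<in> chk (Q z) \<inter> chk (Q (Suc z)))"
  unfolding ES0_iff stare0_def bex_simps ball_simps cube_simps by blast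

lemma E1_slice: "((x,y,int z),1) \<in> ES C \<longleftrightarrow>
  (x \<in> hat (P z) \<and> y \<in> Q z \<or> x \<in> hat (P (Suc z)) \<and> y \<in> Q (Suc z)) \<and>
  \<not> (x \<in> chk (P z) \<inter> chk (P (Suc z)) \<and> y \<in> Q z \<inter> Q (Suc z))"
  unfolding ES1_iff stare1_def bex_simps ball_simps cube_simps by blast

lemma E2_slice: "((x,y,int z),2) \<in> ES C \<longleftrightarrow>
  (x \<in> hat (P (Suc z)) \<and> y \<in> hat (Q (Suc z)) \<or> x \<in> {} \<and> y \<in> {}) \<and>
  \<not> (x \<in> chk (P (Suc z)) \<and> y \<in> chk (Q (Suc z)))"
  unfolding ES2_iff stare2_def bex_simps ball_simps cube_simps by blast

lemma F0_slice: "((x,y,int z),0) \<in> boundary_faces C \<longleftrightarrow>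
  (x \<in> hat (P (Suc z)) \<and> y \<in> Q (Suc z) \<or> x \<in> {} \<and> y \<in> {}) \<and>
  \<not> (x \<in> chk (P (Suc z)) \<and> y \<in> Q (Suc z))"
  by (auto simp: bf_iff cube_simps)

lemma F1_slice: "((x,y,int z),1) \<in> boundary_faces C \<longleftrightarrow>
  (x \<in> P (Suc z) \<and> y \<in> hat (Q (Suc z)) \<or> x \<in> {} \<and> y \<in> {}) \<and>
  \<not> (x \<in> P (Suc z) \<and> y \<in> chk (Q (Suc z)))"
  by (auto simp: bf_iff cube_simps)

lemma F2_slice: "((x,y,int z),2) \<in> boundary_faces C \<longleftrightarrow>
  (x \<in> P z \<and> y \<in> Q z \<or> x \<in> P (Suc z) \<and> y \<in> Q (Suc z)) \<and>
  \<not> (x \<in> P z \<inter> P (Suc z) \<and> y \<in> Q z \<inter> Q (Suc z))"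
  by (auto simp: bf_iff cube_simps)

lemma rng_cube2: "(a,b,z) \<in> C \<or> (a,b,z-1) \<in> C \<Longrightarrow> 0 \<le> z \<and> z < int K"
  using cube_rng[of a b z] cube_rng[of a b "z-1"] by auto

lemma rngV: "(x,y,z) \<in> VS C \<Longrightarrow> 0 \<le> z \<and> z < int K"
  unfolding VS_iff star8_def using rng_cube2 by blast
lemma rngE0: "((x,y,z),0) \<in> ES C \<Longrightarrow> 0 \<le> z \<and> z < int K"
  unfolding ES0_iff stare0_def using rng_cube2 by blast
lemma rngE1: "((x,y,z),1) \<in> ES C \<Longrightarrow> 0 \<le> z \<and> z < int K"
  unfolding ES1_iff stare1_def using rng_cube2 by blast
lemma rngE2: "((x,y,z),2) \<in> ES C \<Longrightarrow> 0 \<le> z \<and> z < int K"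
  unfolding ES2_iff stare2_def using rng_cube2 by blast
lemma rngF: "((x,y,z),b) \<in> boundary_faces C \<Longrightarrow> 0 \<le> z \<and> z < int K"
proof -
  assume a: "((x,y,z),b) \<in> boundary_faces C"
  then have "b = 0 \<or> b = 1 \<or> b = 2" by (auto simp: bf_iff)
  with a show ?thesis by (auto simp: bf_iff dest!: cube_rng)
qed

lemmas cs = chk_sub_hat chk_sub sub_hat

lemma cV: "finite {(x,y,z). (x,y,z) \<in> VS C}" "int (card {(x,y,z). (x,y,z) \<in> VS C}) = (\<Sum>z<K. SA (hat (P z)) (hat (Q z)) (hat (P (Suc z))) (hat (Q (Suc z))) (chk (P z) \<inter> chk (P (Suc z))) (chk (Q z) \<inter> chk (Q (Suc z))))"
proof -
  note r = count_type[where \<Phi> = "\<lambda>x y z. (x,y,z) \<in> VS C" and K = K, OF rngV V_slice]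
  show "finite {(x,y,z). (x,y,z) \<in> VS C}" by (rule r(1)) (use fP fQ cs in auto)
  show "int (card {(x,y,z). (x,y,z) \<in> VS C}) = (\<Sum>z<K. SA (hat (P z)) (hat (Q z)) (hat (P (Suc z))) (hat (Q (Suc z))) (chk (P z) \<inter> chk (P (Suc z))) (chk (Q z) \<inter> chk (Q (Suc z))))" by (rule r(2)) (use fP fQ cs in auto)
qed

lemma cE0: "finite {(x,y,z). ((x,y,z),0) \<in> ES C}" "int (card {(x,y,z). ((x,y,z),0) \<in> ES C}) = (\<Sum>z<K. SA (P z) (hat (Q z)) (P (Suc z)) (hat (Q (Suc z))) (P z \<inter> P (Suc z)) (chk (Q z) \<inter> chk (Q (Suc z))))"
proof -
  note r = count_type[where \<Phi> = "\<lambda>x y z. ((x,y,z),0) \<in> ES C" and K = K, OF rngE0 E0_slice]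
  show "finite {(x,y,z). ((x,y,z),0) \<in> ES C}" by (rule r(1)) (use fP fQ cs in auto)
  show "int (card {(x,y,z). ((x,y,z),0) \<in> ES C}) = (\<Sum>z<K. SA (P z) (hat (Q z)) (P (Suc z)) (hat (Q (Suc z))) (P z \<inter> P (Suc z)) (chk (Q z) \<inter> chk (Q (Suc z))))" by (rule r(2)) (use fP fQ cs in auto)
qed

lemma cE1: "finite {(x,y,z). ((x,y,z),1) \<in> ES C}" "int (card {(x,y,z). ((x,y,z),1) \<in> ES C}) = (\<Sum>z<K. SA (hat (P z)) (Q z) (hat (P (Suc z))) (Q (Suc z)) (chk (P z) \<inter> chk (P (Suc z))) (Q z \<inter> Q (Suc z)))"
proof -
  note r = count_type[where \<Phi> = "\<lambda>x y z. ((x,y,z),1) \<in> ES C" and K = K, OF rngE1 E1_slice]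
  show "finite {(x,y,z). ((x,y,z),1) \<in> ES C}" by (rule r(1)) (use fP fQ cs in auto)
  show "int (card {(x,y,z). ((x,y,z),1) \<in> ES C}) = (\<Sum>z<K. SA (hat (P z)) (Q z) (hat (P (Suc z))) (Q (Suc z)) (chk (P z) \<inter> chk (P (Suc z))) (Q z \<inter> Q (Suc z)))" by (rule r(2)) (use fP fQ cs in auto)
qed

lemma cE2: "finite {(x,y,z). ((x,y,z),2) \<in> ES C}" "int (card {(x,y,z). ((x,y,z),2) \<in> ES C}) = (\<Sum>z<K. SA (hat (P (Suc z))) (hat (Q (Suc z))) {} {} (chk (P (Suc z))) (chk (Q (Suc z))))"
proof -
  note r = count_type[where \<Phi> = "\<lambda>x y z. ((x,y,z),2) \<in> ES C" and K = K, OF rngE2 E2_slice]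
  show "finite {(x,y,z). ((x,y,z),2) \<in> ES C}" by (rule r(1)) (use fP fQ cs in auto)
  show "int (card {(x,y,z). ((x,y,z),2) \<in> ES C}) = (\<Sum>z<K. SA (hat (P (Suc z))) (hat (Q (Suc z))) {} {} (chk (P (Suc z))) (chk (Q (Suc z))))" by (rule r(2)) (use fP fQ cs in auto)
qed

lemma cF0: "finite {(x,y,z). ((x,y,z),0) \<in> boundary_faces C}" "int (card {(x,y,z). ((x,y,z),0) \<in> boundary_faces C}) = (\<Sum>z<K. SA (hat (P (Suc z))) (Q (Suc z)) {} {} (chk (P (Suc z))) (Q (Suc z)))"
proof -
  note r = count_type[where \<Phi> = "\<lambda>x y z. ((x,y,z),0) \<in> boundary_faces C" and K = K, OF rngF F0_slice]
  show "finite {(x,y,z). ((x,y,z),0) \<in> boundary_faces C}" by (rule r(1)) (use fP fQ cs in auto)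
  show "int (card {(x,y,z). ((x,y,z),0) \<in> boundary_faces C}) = (\<Sum>z<K. SA (hat (P (Suc z))) (Q (Suc z)) {} {} (chk (P (Suc z))) (Q (Suc z)))" by (rule r(2)) (use fP fQ cs in auto)
qed

lemma cF1: "finite {(x,y,z). ((x,y,z),1) \<in> boundary_faces C}" "int (card {(x,y,z). ((x,y,z),1) \<in> boundary_faces C}) = (\<Sum>z<K. SA (P (Suc z)) (hat (Q (Suc z))) {} {} (P (Suc z)) (chk (Q (Suc z))))"
proof -
  note r = count_type[where \<Phi> = "\<lambda>x y z. ((x,y,z),1) \<in> boundary_faces C" and K = K, OF rngF F1_slice]
  show "finite {(x,y,z). ((x,y,z),1) \<in> boundary_faces C}" by (rule r(1)) (use fP fQ cs in auto)
  show "int (card {(x,y,z). ((x,y,z),1) \<in> boundary_faces C}) = (\<Sum>z<K. SA (P (Suc z)) (hat (Q (Suc z))) {} {} (P (Suc z)) (chk (Q (Suc z))))" by (rule r(2)) (use fP fQ cs in auto)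
qed

lemma cF2: "finite {(x,y,z). ((x,y,z),2) \<in> boundary_faces C}" "int (card {(x,y,z). ((x,y,z),2) \<in> boundary_faces C}) = (\<Sum>z<K. SA (P z) (Q z) (P (Suc z)) (Q (Suc z)) (P z \<inter> P (Suc z)) (Q z \<inter> Q (Suc z)))"
proof -
  note r = count_type[where \<Phi> = "\<lambda>x y z. ((x,y,z),2) \<in> boundary_faces C" and K = K, OF rngF F2_slice]
  show "finite {(x,y,z). ((x,y,z),2) \<in> boundary_faces C}" by (rule r(1)) (use fP fQ cs in auto)
  show "int (card {(x,y,z). ((x,y,z),2) \<in> boundary_faces C}) = (\<Sum>z<K. SA (P z) (Q z) (P (Suc z)) (Q (Suc z)) (P z \<inter> P (Suc z)) (Q z \<inter> Q (Suc z)))" by (rule r(2)) (use fP fQ cs in auto)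
qed

lemma ES_split: "ES C = (\<lambda>p. (p,0::nat)) ` {(x,y,z). ((x,y,z),0) \<in> ES C} \<union> (\<lambda>p. (p,1)) ` {(x,y,z). ((x,y,z),1) \<in> ES C} \<union> (\<lambda>p. (p,2)) ` {(x,y,z). ((x,y,z),2) \<in> ES C}"
proof (rule set_eqI)
  fix e :: "pt \<times> nat"
  obtain x y z a where e: "e = ((x,y,z),a)" by (cases e) auto
  show "e \<in> ES C \<longleftrightarrow> e \<in> (\<lambda>p. (p,0::nat)) ` {(x,y,z). ((x,y,z),0) \<in> ES C} \<union> (\<lambda>p. (p,1)) ` {(x,y,z). ((x,y,z),1) \<in> ES C} \<union> (\<lambda>p. (p,2)) ` {(x,y,z). ((x,y,z),2) \<in> ES C}"
  proof -
    have "e \<in> ES C \<Longrightarrow> a = 0 \<or> a = 1 \<or> a = 2" unfolding e using ES_other[of a "(x,y,z)" C] by blast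
    then show ?thesis unfolding e by (auto simp: image_iff)
  qed
qed

lemma BF_split: "boundary_faces C = (\<lambda>p. (p,0::nat)) ` {(x,y,z). ((x,y,z),0) \<in> boundary_faces C} \<union> (\<lambda>p. (p,1)) ` {(x,y,z). ((x,y,z),1) \<in> boundary_faces C} \<union> (\<lambda>p. (p,2)) ` {(x,y,z). ((x,y,z),2) \<in> boundary_faces C}"
proof (rule set_eqI)
  fix e :: "pt \<times> nat"
  obtain x y z a where e: "e = ((x,y,z),a)" by (cases e) auto
  have "e \<in> boundary_faces C \<Longrightarrow> a = 0 \<or> a = 1 \<or> a = 2" unfolding e by (auto simp: bf_iff)
  then show "e \<in> boundary_faces C \<longleftrightarrow> e \<in> (\<lambda>p. (p,0::nat)) ` {(x,y,z). ((x,y,z),0) \<in> boundary_faces C} \<union> (\<lambda>p. (p,1)) ` {(x,y,z). ((x,y,z),1) \<in> boundary_faces C} \<union> (\<lambda>p. (p,2)) ` {(x,y,z). ((x,y,z),2) \<in> boundary_faces C}"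
    unfolding e by (auto simp: image_iff)
qed

lemma chi_formula: "boundary_euler_char C = (\<Sum>z<K. planeH (P z) (Q z) (P (Suc z)) (Q (Suc z)) + layerL (P (Suc z)) (Q (Suc z)))"
proof -
  have v: "VS C = {(x,y,z). (x,y,z) \<in> VS C}" by auto
  have cES: "card (ES C) = card {(x,y,z). ((x,y,z),0) \<in> ES C} + card {(x,y,z). ((x,y,z),1) \<in> ES C} + card {(x,y,z). ((x,y,z),2) \<in> ES C}"
    by (rule card3[OF cE0(1) cE1(1) cE2(1) ES_split])
  have cBF: "card (boundary_faces C) = card {(x,y,z). ((x,y,z),0) \<in> boundary_faces C} + card {(x,y,z). ((x,y,z),1) \<in> boundary_faces C} + card {(x,y,z). ((x,y,z),2) \<in> boundary_faces C}"
    by (rule card3[OF cF0(1) cF1(1) cF2(1) BF_split])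
  have "boundary_euler_char C = int (card (VS C)) - int (card (ES C)) + int (card (boundary_faces C))"
    unfolding boundary_euler_char_def VS_def ES_def ..
  also have "\<dots> = int (card {(x,y,z). (x,y,z) \<in> VS C})
     - (int (card {(x,y,z). ((x,y,z),0) \<in> ES C}) + int (card {(x,y,z). ((x,y,z),1) \<in> ES C}) + int (card {(x,y,z). ((x,y,z),2) \<in> ES C}))
     + (int (card {(x,y,z). ((x,y,z),0) \<in> boundary_faces C}) + int (card {(x,y,z). ((x,y,z),1) \<in> boundary_faces C}) + int (card {(x,y,z). ((x,y,z),2) \<in> boundary_faces C}))"
    using cES cBF v by simp
  also have "\<dots> = (\<Sum>z<K. planeH (P z) (Q z) (P (Suc z)) (Q (Suc z)) + layerL (P (Suc z)) (Q (Suc z)))"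
    unfolding cV(2) cE0(2) cE1(2) cE2(2) cF0(2) cF1(2) cF2(2) planeH_def layerL_def
    by (simp add: sum.distrib sum_subtractf algebra_simps)
  finally show ?thesis .
qed

end



definition sh :: "nat set \<Rightarrow> int set" where "sh S = (\<lambda>j. int j - 1) ` S"
definition II :: "nat \<Rightarrow> int set" where "II n = {0..<int n}"
definition PP :: "nat \<Rightarrow> (nat \<times> nat) set \<Rightarrow> nat \<Rightarrow> int set" where
  "PP n B i = (if level B i = {} then {} else if odd i then II n else sh (level B i))"
definition QQ :: "nat \<Rightarrow> (nat \<times> nat) set \<Rightarrow> nat \<Rightarrow> int set" where
  "QQ n B i = (if level B i = {} then {} else if odd i then sh (level B i) else II n)"

lemma cube_mem:
  assumes B: "\<And>i j. (i,j) \<in> B \<Longrightarrow> 1 \<le> i"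
  shows "(x,y,z) \<in> config_cubes n B \<longleftrightarrow> x \<in> PP n B (nat (z+1)) \<and> y \<in> QQ n B (nat (z+1))"
proof
  assume "(x,y,z) \<in> config_cubes n B"
  then obtain i j where ij: "(i,j) \<in> B" and c: "(x,y,z) \<in> block_cubes n i j"
    unfolding config_cubes_def by auto
  have i1: "1 \<le> i" using B[OF ij] .
  have lv: "j \<in> level B i" using ij by (simp add: level_def)
  then have ne: "level B i \<noteq> {}" by auto
  show "x \<in> PP n B (nat (z+1)) \<and> y \<in> QQ n B (nat (z+1))"
  proof (cases "odd i")
    case True
    with c have "0 \<le> x \<and> x < int n \<and> y = int j - 1 \<and> z = int i - 1" by (auto simp: block_cubes_def)
    moreover from this have "nat (z+1) = i" by simp
    ultimately show ?thesis using True ne lv by (auto simp: PP_def QQ_def II_def sh_def)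
  next
    case False
    with c have "0 \<le> y \<and> y < int n \<and> x = int j - 1 \<and> z = int i - 1" by (auto simp: block_cubes_def)
    moreover from this have "nat (z+1) = i" by simp
    ultimately show ?thesis using False ne lv by (auto simp: PP_def QQ_def II_def sh_def)
  qed
next
  assume a: "x \<in> PP n B (nat (z+1)) \<and> y \<in> QQ n B (nat (z+1))"
  define i where "i = nat (z+1)"
  have ne: "level B i \<noteq> {}" using a unfolding i_def PP_def by (auto split: if_splits)
  then obtain j0 where "(i,j0) \<in> B" by (auto simp: level_def)
  then have "1 \<le> i" using B by blast
  then have zi: "z = int i - 1" unfolding i_def by linarith
  show "(x,y,z) \<in> config_cubes n B"
  proof (cases "odd i")
    case True
    with a ne have x: "0 \<le> x \<and> x < int n" and "y \<in> sh (level B i)" unfolding i_def[symmetric]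
      by (auto simp: PP_def QQ_def II_def)
    then obtain j where j: "(i,j) \<in> B" "y = int j - 1" by (auto simp: sh_def level_def)
    have "(x,y,z) \<in> block_cubes n i j" using True x j zi by (auto simp: block_cubes_def)
    then show ?thesis using j unfolding config_cubes_def by blast
  next
    case False
    with a ne have y: "0 \<le> y \<and> y < int n" and "x \<in> sh (level B i)" unfolding i_def[symmetric]
      by (auto simp: PP_def QQ_def II_def)
    then obtain j where j: "(i,j) \<in> B" "x = int j - 1" by (auto simp: sh_def level_def)
    have "(x,y,z) \<in> block_cubes n i j" using False y j zi by (auto simp: block_cubes_def)
    then show ?thesis using j unfolding config_cubes_def by blast
  qed
qed

lemma hat_empty[simp]: "hat {} = {}" by (simp add: hat_def)
lemma chk_empty[simp]: "chk {} = {}" by (simp add: chk_def)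

lemma hat_ivl: "l < u \<Longrightarrow> hat {l..<u} = {l..u::int}"
  by (auto simp: hat_iff)
lemma chk_ivl: "chk {l..<u} = {l+1..<u::int}"
  by (auto simp: chk_iff)

lemma hat_mono: "X \<subseteq> Y \<Longrightarrow> hat X \<subseteq> hat Y" by (auto simp: hat_iff)
lemma chk_mono: "X \<subseteq> Y \<Longrightarrow> chk X \<subseteq> chk Y" by (auto simp: chk_iff)

lemma card_II[simp]: "card (II n) = n" by (simp add: II_def)
lemma card_hat_II: "n \<ge> 1 \<Longrightarrow> int (card (hat (II n))) = int n + 1"
  by (simp add: II_def hat_ivl)
lemma card_chk_II: "n \<ge> 1 \<Longrightarrow> int (card (chk (II n))) = int n - 1"
  by (simp add: II_def chk_ivl)
lemma finite_II[simp]: "finite (II n)" by (simp add: II_def)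
lemma finite_sh[simp]: "finite S \<Longrightarrow> finite (sh S)" by (simp add: sh_def)

lemma card_sh: "card (sh S) = card S"
  unfolding sh_def by (rule card_image) (simp add: inj_on_def)

lemma sh_sub: "S \<subseteq> {1..n} \<Longrightarrow> sh S \<subseteq> II n"
  by (auto simp: sh_def II_def)

lemma sh_full: "sh {1..n} = II n"
proof
  show "sh {1..n} \<subseteq> II n" by (rule sh_sub) simp
  show "II n \<subseteq> sh {1..n}"
  proof
    fix x assume "x \<in> II n"
    then have "0 \<le> x" "x < int n" by (auto simp: II_def)
    then have "nat (x+1) \<in> {1..n}" "x = int (nat (x+1)) - 1" by auto
    then show "x \<in> sh {1..n}" unfolding sh_def by blast
  qed
qed

lemma sh_run: "sh {a..<a+m} = {int a - 1..<int a - 1 + int m}"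
proof
  show "sh {a..<a+m} \<subseteq> {int a - 1..<int a - 1 + int m}" by (auto simp: sh_def)
  show "{int a - 1..<int a - 1 + int m} \<subseteq> sh {a..<a+m}"
  proof
    fix x assume "x \<in> {int a - 1..<int a - 1 + int m}"
    then have "nat (x+1) \<in> {a..<a+m}" "x = int (nat (x+1)) - 1" by auto
    then show "x \<in> sh {a..<a+m}" unfolding sh_def by blast
  qed
qed

lemma nonadj_chk:
  assumes "\<forall>j\<in>S. \<forall>j'\<in>S. j' \<noteq> j + 1"
  shows "chk (sh S) = {}"
proof (rule ccontr)
  assume "chk (sh S) \<noteq> {}"
  then obtain x where "x \<in> sh S" "x - 1 \<in> sh S" by (auto simp: chk_iff)
  then obtain j j' where "j \<in> S" "j' \<in> S" "x = int j - 1" "x - 1 = int j' - 1" by (auto simp: sh_def)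
  then have "j = j' + 1" by linarith
  with assms \<open>j \<in> S\<close> \<open>j' \<in> S\<close> show False by blast
qed


definition Hform :: "int \<Rightarrow> int \<Rightarrow> int \<Rightarrow> int \<Rightarrow> int \<Rightarrow> int \<Rightarrow> int \<Rightarrow> int" where
  "Hform N cX hX vX cY hY vY = ((N+1)*hY + hX*(N+1) - hX*hY - vX*vY) - (N*hY + cX*(N+1) - cX*hY - cX*vY)
     - ((N+1)*cY + hX*N - hX*cY - vX*cY) + (N*cY + cX*N - 2*cX*cY)"

lemma planeH_rc:
  assumes X: "X \<subseteq> II n" and Y: "Y \<subseteq> II n" and n: "n \<ge> 1"
  shows "planeH (II n) Y X (II n) = Hform (int n) (int (card X)) (int (card (hat X))) (int (card (chk X)))
                                        (int (card Y)) (int (card (hat Y))) (int (card (chk Y)))"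
proof -
  have i1: "hat (II n) \<inter> hat X = hat X" using hat_mono[OF X] by blast
  have i2: "hat Y \<inter> hat (II n) = hat Y" using hat_mono[OF Y] by blast
  have i3: "chk (II n) \<inter> chk X = chk X" using chk_mono[OF X] by blast
  have i4: "chk Y \<inter> chk (II n) = chk Y" using chk_mono[OF Y] by blast
  have i5: "II n \<inter> X = X" using X by blast
  have i6: "Y \<inter> II n = Y" using Y by blast
  show ?thesis unfolding planeH_def SA_def i1 i2 i3 i4 i5 i6
    using card_hat_II[OF n] card_chk_II[OF n] by (simp add: Hform_def algebra_simps)
qed

lemma planeH_cr:
  assumes X: "X \<subseteq> II n" and Y: "Y \<subseteq> II n" and n: "n \<ge> 1"
  shows "planeH X (II n) (II n) Y = Hform (int n) (int (card X)) (int (card (hat X))) (int (card (chk X)))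
                                        (int (card Y)) (int (card (hat Y))) (int (card (chk Y)))"
proof -
  have i1: "hat X \<inter> hat (II n) = hat X" using hat_mono[OF X] by blast
  have i2: "hat (II n) \<inter> hat Y = hat Y" using hat_mono[OF Y] by blast
  have i3: "chk X \<inter> chk (II n) = chk X" using chk_mono[OF X] by blast
  have i4: "chk (II n) \<inter> chk Y = chk Y" using chk_mono[OF Y] by blast
  have i5: "X \<inter> II n = X" using X by blast
  have i6: "II n \<inter> Y = Y" using Y by blast
  show ?thesis unfolding planeH_def SA_def i1 i2 i3 i4 i5 i6
    using card_hat_II[OF n] card_chk_II[OF n] by (simp add: Hform_def algebra_simps)
qed

lemma planeH_bot: "n \<ge> 1 \<Longrightarrow> planeH {} {} (II n) Y = int (card (hat Y)) - int (card Y)"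
  unfolding planeH_def SA_def using card_hat_II[of n] by (simp add: algebra_simps)

lemma planeH_top: "n \<ge> 1 \<Longrightarrow> planeH (II n) Y {} {} = int (card (hat Y)) - int (card Y)"
  unfolding planeH_def SA_def using card_hat_II[of n] by (simp add: algebra_simps)

lemma nonadj_cards:
  assumes "S \<subseteq> {1..n}" "card S = m" "\<forall>j\<in>S. \<forall>j'\<in>S. j' \<noteq> j + 1"
  shows "int (card (sh S)) = int m" "int (card (hat (sh S))) = 2 * int m" "int (card (chk (sh S))) = 0"
proof -
  have f: "finite S" using assms(1) finite_subset by blast
  show c: "int (card (sh S)) = int m" using assms(2) card_sh by simp
  show "int (card (chk (sh S))) = 0" using nonadj_chk[OF assms(3)] by simp
  then show "int (card (hat (sh S))) = 2 * int m" using hat_chk_card[of "sh S"] f c by simp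
qed

lemma run_cards:
  assumes "m \<ge> 1"
  shows "int (card (sh {a..<a+m})) = int m" "int (card (hat (sh {a..<a+m}))) = int m + 1"
    "int (card (chk (sh {a..<a+m}))) = int m - 1"
proof -
  show "int (card (sh {a..<a+m})) = int m" by (simp add: sh_run)
  show "int (card (hat (sh {a..<a+m}))) = int m + 1" using assms by (simp add: sh_run hat_ivl)
  show "int (card (chk (sh {a..<a+m}))) = int m - 1" using assms by (simp add: sh_run chk_ivl)
qed



theorem mainTheorem4:
  fixes n k :: nat and B :: "(nat \<times> nat) set"
  assumes "n \<ge> 2" and "even n" and "k \<ge> 3"
    and "is_Q n k B"
  shows "boundary_genus (config_cubes n B) = real n * (real n - 2) * (real k - 2) / 2"
proof -
  define m where "m = n div 2"
  have n2m: "n = 2*m" using assms(2) unfolding m_def by simp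
  have m1: "m \<ge> 1" using assms(1) n2m by simp
  have n1: "n \<ge> 1" using assms(1) by simp
  from assms(4) obtain a where
      Bsub: "B \<subseteq> {1..2*k-1} \<times> {1..n}"
    and top: "level B (2*k-1) = {a..<a + m}"
    and full: "level B (2*k-2) = {1..n}"
    and low: "\<forall>i\<in>{1..2*k-3}. card (level B i) = m \<and> (\<forall>j\<in>level B i. \<forall>j'\<in>level B i. j' \<noteq> j + 1)"
    unfolding is_Q_def m_def by blast
  have Lsub: "level B i \<subseteq> {1..n}" for i using Bsub by (auto simp: level_def)
  have LK: "level B i = {}" if "i \<ge> 2*k" for i
  proof -
    have "i \<le> 2*k-1" if "(i,j) \<in> B" for j using Bsub that by auto
    then show ?thesis using \<open>i \<ge> 2*k\<close> assms(3) by (force simp: level_def)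
  qed
  have L0: "level B 0 = {}" using Bsub by (auto simp: level_def)
  have Bi: "\<And>i j. (i,j) \<in> B \<Longrightarrow> 1 \<le> i" using Bsub by auto
  have fL: "finite (level B i)" for i using Lsub[of i] finite_subset by blast
  have PPe: "PP n B i = II n \<and> QQ n B i = sh (level B i)" if "level B i \<noteq> {}" "odd i" for i
    using that by (simp add: PP_def QQ_def)
  have PPo: "PP n B i = sh (level B i) \<and> QQ n B i = II n" if "level B i \<noteq> {}" "even i" for i
    using that by (simp add: PP_def QQ_def)
  have PPz: "PP n B i = {} \<and> QQ n B i = {}" if "level B i = {}" for i
    using that by (simp add: PP_def QQ_def)
  let ?C = "config_cubes n B"
  let ?H = "\<lambda>z. planeH (PP n B z) (QQ n B z) (PP n B (Suc z)) (QQ n B (Suc z))"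
  have fP: "finite (PP n B i)" for i using fL by (simp add: PP_def)
  have fQ: "finite (QQ n B i)" for i using fL by (simp add: QQ_def)
  have chi0: "boundary_euler_char ?C = (\<Sum>z<2*k. ?H z + layerL (PP n B (Suc z)) (QQ n B (Suc z)))"
    by (rule chi_formula[of ?C "PP n B" "QQ n B" "2*k"])
       (use cube_mem[OF Bi] PPz L0 LK fP fQ in auto)
  have chi1: "boundary_euler_char ?C = (\<Sum>z<2*k. ?H z)"
    unfolding chi0 using layerL_zero[OF fP fQ] by simp
  have lowf: "level B i \<noteq> {} \<and> sh (level B i) \<subseteq> II n \<and> int (card (sh (level B i))) = int m \<and>
      int (card (hat (sh (level B i)))) = 2 * int m \<and> int (card (chk (sh (level B i)))) = 0"
    if "1 \<le> i" "i \<le> 2*k-3" for i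
  proof -
    from low that have c: "card (level B i) = m" and na: "\<forall>j\<in>level B i. \<forall>j'\<in>level B i. j' \<noteq> j + 1" by auto
    have "level B i \<noteq> {}" using c m1 by auto
    then show ?thesis using nonadj_cards[OF Lsub c na] sh_sub[OF Lsub] by simp
  qed
  have fullne: "level B (2*k-2) \<noteq> {}" using full n1 by auto
  have topne: "level B (2*k-1) \<noteq> {}" using top m1 by auto
  have topsub: "sh {a..<a+m} \<subseteq> II n" using sh_sub[OF Lsub[of "2*k-1"]] top by simp
  have H0: "?H 0 = int m"
  proof -
    have "1 \<le> 2*k-3" using assms(3) by simp
    from lowf[OF _ this] have l1: "level B 1 \<noteq> {}" "int (card (hat (sh (level B 1)))) = 2 * int m"
      "int (card (sh (level B 1))) = int m" by auto
    have "PP n B 1 = II n \<and> QQ n B 1 = sh (level B 1)" using PPe[OF l1(1)] by simp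
    then show ?thesis using PPz[OF L0] planeH_bot[OF n1] l1 by simp
  qed
  have Hmid: "?H z = 2 * int m - 2 * int m * int m" if "1 \<le> z" "z \<le> 2*k-4" for z
  proof -
    have a1: "level B z \<noteq> {} \<and> sh (level B z) \<subseteq> II n \<and> int (card (sh (level B z))) = int m \<and>
      int (card (hat (sh (level B z)))) = 2 * int m \<and> int (card (chk (sh (level B z)))) = 0"
      using lowf[of z] that by simp
    have a2: "level B (Suc z) \<noteq> {} \<and> sh (level B (Suc z)) \<subseteq> II n \<and> int (card (sh (level B (Suc z)))) = int m \<and>
      int (card (hat (sh (level B (Suc z))))) = 2 * int m \<and> int (card (chk (sh (level B (Suc z))))) = 0"
      using lowf[of "Suc z"] that by simp
    show ?thesis
    proof (cases "odd z")
      case True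
      have "PP n B z = II n \<and> QQ n B z = sh (level B z)" using PPe a1 True by blast
      moreover have "PP n B (Suc z) = sh (level B (Suc z)) \<and> QQ n B (Suc z) = II n" using PPo a2 True by simp
      ultimately show ?thesis using planeH_rc[of "sh (level B (Suc z))" n "sh (level B z)"] a1 a2 n1
        by (simp add: Hform_def algebra_simps)
    next
      case False
      have "PP n B z = sh (level B z) \<and> QQ n B z = II n" using PPo a1 False by blast
      moreover have "PP n B (Suc z) = II n \<and> QQ n B (Suc z) = sh (level B (Suc z))" using PPe a2 False by simp
      ultimately show ?thesis using planeH_cr[of "sh (level B z)" n "sh (level B (Suc z))"] a1 a2 n1
        by (simp add: Hform_def algebra_simps)
    qed
  qed
  have Ha: "?H (2*k-3) = 1 - int m"
  proof -
    have l: "level B (2*k-3) \<noteq> {} \<and> sh (level B (2*k-3)) \<subseteq> II n \<and> int (card (sh (level B (2*k-3)))) = int m \<and>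
      int (card (hat (sh (level B (2*k-3))))) = 2 * int m \<and> int (card (chk (sh (level B (2*k-3))))) = 0"
      using lowf[of "2*k-3"] assms(3) by simp
    have o: "odd (2*k-3)" using assms(3) by presburger
    have s: "Suc (2*k-3) = 2*k-2" using assms(3) by simp
    have e: "even (2*k-2)" using assms(3) by presburger
    have "PP n B (2*k-3) = II n \<and> QQ n B (2*k-3) = sh (level B (2*k-3))" using PPe l o by blast
    moreover have "PP n B (Suc (2*k-3)) = II n \<and> QQ n B (Suc (2*k-3)) = II n"
      unfolding s using PPo[OF fullne e] full sh_full by simp
    ultimately show ?thesis using planeH_rc[of "II n" n "sh (level B (2*k-3))"] l n1
        card_hat_II[OF n1] card_chk_II[OF n1]
      by (simp add: Hform_def algebra_simps)
  qed
  have Hb: "?H (2*k-2) = 0"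
  proof -
    have s: "Suc (2*k-2) = 2*k-1" using assms(3) by simp
    have e: "even (2*k-2)" using assms(3) by presburger
    have o: "odd (2*k-1)" using assms(3) by presburger
    have "PP n B (2*k-2) = II n \<and> QQ n B (2*k-2) = II n"
      using PPo[OF fullne e] full sh_full by simp
    moreover have "PP n B (Suc (2*k-2)) = II n \<and> QQ n B (Suc (2*k-2)) = sh {a..<a+m}"
      unfolding s using PPe[OF topne o] top by simp
    ultimately show ?thesis using planeH_cr[OF _ topsub n1, of "II n"] run_cards[OF m1, of a]
        card_hat_II[OF n1] card_chk_II[OF n1]
      by (simp add: Hform_def algebra_simps)
  qed
  have Hc: "?H (2*k-1) = 1"
  proof -
    have s: "Suc (2*k-1) = 2*k" using assms(3) by simp
    have o: "odd (2*k-1)" using assms(3) by presburger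
    have "PP n B (2*k-1) = II n \<and> QQ n B (2*k-1) = sh {a..<a+m}"
      using PPe[OF topne o] top by simp
    moreover have "PP n B (Suc (2*k-1)) = {} \<and> QQ n B (Suc (2*k-1)) = {}"
      unfolding s using PPz LK by simp
    ultimately show ?thesis using planeH_top[OF n1] run_cards[OF m1, of a] by simp
  qed
  define M where "M = 2*k-4"
  have kM: "2*k = Suc (Suc (Suc (Suc M)))" using assms(3) unfolding M_def by simp
  have "(\<Sum>z<2*k. ?H z) = ?H 0 + (\<Sum>z<M. ?H (Suc z)) + ?H (Suc M) + ?H (Suc (Suc M)) + ?H (Suc (Suc (Suc M)))"
  proof -
    have e1: "(\<Sum>z<2*k. ?H z) = (\<Sum>z<Suc M. ?H z) + ?H (Suc M) + ?H (Suc (Suc M)) + ?H (Suc (Suc (Suc M)))"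
      unfolding kM by simp
    have e2: "(\<Sum>z<Suc M. ?H z) = ?H 0 + (\<Sum>z<M. ?H (Suc z))" by (rule sum.lessThan_Suc_shift)
    show ?thesis unfolding e1 e2 ..
  qed
  also have "(\<Sum>z<M. ?H (Suc z)) = (\<Sum>z<M. 2 * int m - 2 * int m * int m)"
    by (rule sum.cong) (use Hmid M_def in auto)
  finally have sumeq: "(\<Sum>z<2*k. ?H z) = ?H 0 + (\<Sum>z<M. 2 * int m - 2 * int m * int m) + ?H (Suc M) + ?H (Suc (Suc M)) + ?H (Suc (Suc (Suc M)))" .
  have sucs: "Suc M = 2*k-3" "Suc (Suc M) = 2*k-2" "Suc (Suc (Suc M)) = 2*k-1" using assms(3) unfolding M_def by auto
  have chi: "boundary_euler_char ?C = 2 + int M * (2 * int m - 2 * int m * int m)"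
  proof -
    have a: "?H (Suc M) = 1 - int m" using Ha sucs(1) by simp
    have b: "?H (Suc (Suc M)) = 0" using Hb sucs(2) by simp
    have c: "?H (Suc (Suc (Suc M))) = 1" using Hc sucs(3) by simp
    show ?thesis unfolding chi1 sumeq a b c H0 by simp
  qed
  have rM: "real M = 2 * real k - 4" using assms(3) unfolding M_def by simp
  have rn: "real n = 2 * real m" using n2m by simp
  have rk: "real k = (real M + 4) / 2" using rM by simp
  show ?thesis unfolding boundary_genus_def chi rn rk
    by (simp add: field_simps)
qed


end
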